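(* Let $n\ge0$ and $f:[-1,1]\to\mathbb R$. Let $\boldsymbol\gamma:\mathbb Z\to\mathbb R$ be a real sequence supported in $\{0,1,\dots,n\}$, and write its NLFT as $\overbrace{\boldsymbol\gamma}(z)=\begin{pmatrix}a(z)&b(z)\\-b^*(z)&a^*(z)\end{pmatrix}$. Suppose $\operatorname{Re}\big[b(e^{2i\theta})e^{-in\theta}\big]=f(\cos\theta)$ for all $\theta\in[0,\pi]$. Let $\psi_k:=\arctan\gamma_k\in(-\frac\pi2,\frac\pi2)$ for $k=0,\dots,n$ and $\Psi=(\psi_0,\dots,\psi_n)$. Then $\operatorname{Im}\big(u_n(\Psi,x)\big)=f(x)$ for all $x\in[-1,1]$, where $u_n(\Psi,x)$ denotes the $(1,1)$ entry of $U_n(\Psi,x)$.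
   Context: $Z=\begin{pmatrix}1&0\\0&-1\end{pmatrix}$. For $x\in[-1,1]$, $W(x):=\begin{pmatrix}x& i\sqrt{1-x^2}\\ i\sqrt{1-x^2}&x\end{pmatrix}$ and $U_n(\Psi,x):=e^{i\psi_0 Z}\prod_{k=1}^n\big(W(x)e^{i\psi_k Z}\big)$ (factors ordered with increasing $k$ left to right). For a Laurent polynomial $a$, $a^*(z):=\overline{a(1/\overline z)}$. For a compactly supported $\boldsymbol\gamma:\mathbb Z\to\mathbb C$ supported in $[m,n']$, its NLFT is $\overbrace{\boldsymbol\gamma}(z):=\prod_{k=m}^{n'}\frac{1}{\sqrt{1+|\gamma_k|^2}}\begin{pmatrix}1&\gamma_k z^k\\-\overline{\gamma_k}z^{-k}&1\end{pmatrix}$ (ordered by increasing $k$ left to right); it always has the form $\begin{pmatrix}a&b\\-b^*&a^*\end{pmatrix}$ with $a,b$ Laurent polynomials. *)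

theory Defs
  imports "HOL-Analysis.Analysis"
begin

text \<open>2x2 complex matrices are rendered as complex^2^2 (rows/columns indexed by 1, 2).\<close>

definition mat2 :: "complex \<Rightarrow> complex \<Rightarrow> complex \<Rightarrow> complex \<Rightarrow> complex^2^2" where
  "mat2 a b c d = vector [vector [a, b], vector [c, d]]"

definition Zmat :: "complex^2^2" where
  "Zmat = mat2 1 0 0 (-1)"

definition expiZ :: "real \<Rightarrow> complex^2^2" where
  "expiZ psi = mat2 (exp (\<i> * of_real psi)) 0 0 (exp (- \<i> * of_real psi))"

definition Wmat :: "real \<Rightarrow> complex^2^2" where
  "Wmat x = mat2 (of_real x) (\<i> * of_real (sqrt (1 - x\<^sup>2)))
                 (\<i> * of_real (sqrt (1 - x\<^sup>2))) (of_real x)"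

fun Umat :: "nat \<Rightarrow> (nat \<Rightarrow> real) \<Rightarrow> real \<Rightarrow> complex^2^2" where
  "Umat 0 Psi x = expiZ (Psi 0)"
| "Umat (Suc n) Psi x = Umat n Psi x ** (Wmat x ** expiZ (Psi (Suc n)))"

definition nlft_factor :: "complex \<Rightarrow> int \<Rightarrow> complex \<Rightarrow> complex^2^2" where
  "nlft_factor g k z =
     (let s = complex_of_real (sqrt (1 + (cmod g)\<^sup>2)) in
      mat2 (1 / s) (g * z powi k / s) (- cnj g * z powi (- k) / s) (1 / s))"

definition nlft :: "(int \<Rightarrow> complex) \<Rightarrow> int \<Rightarrow> int \<Rightarrow> complex \<Rightarrow> complex^2^2" where
  "nlft gamma m m' z = foldl (**) (mat 1) (map (\<lambda>k. nlft_factor (gamma k) k z) [m..m'])"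

definition nlft_b :: "(int \<Rightarrow> complex) \<Rightarrow> int \<Rightarrow> int \<Rightarrow> complex \<Rightarrow> complex" where
  "nlft_b gamma m m' z = nlft gamma m m' z $ 1 $ 2"

end

theory Submission
  imports Defs
begin

lemma mat2_nth[simp]:
  "mat2 a b c d $ 1 $ 1 = a" "mat2 a b c d $ 1 $ 2 = b"
  "mat2 a b c d $ 2 $ 1 = c" "mat2 a b c d $ 2 $ 2 = d"
  by (simp_all add: mat2_def)

lemma mat2_eta: "M = mat2 (M$1$1) (M$1$2) (M$2$1) (M$2$2)"
  unfolding vec_eq_iff forall_2 by simp

lemma mat2_eq_iff: "mat2 a b c d = mat2 e f g h \<longleftrightarrow> a = e \<and> b = f \<and> c = g \<and> d = h"
  unfolding vec_eq_iff forall_2 by simp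

lemma mat2_mult: "mat2 a b c d ** mat2 e f g h = mat2 (a*e+b*g) (a*f+b*h) (c*e+d*g) (c*f+d*h)"
  unfolding vec_eq_iff forall_2 by (simp add: matrix_matrix_mult_def sum_2)

lemma mat2_one: "(mat 1 :: complex^2^2) = mat2 1 0 0 1"
  unfolding vec_eq_iff forall_2 by (simp add: mat_def)


definition Am :: "complex^2^2" where "Am = mat2 (1/2) (-\<i>/2) (1/2) (\<i>/2)"
definition Bm :: "complex^2^2" where "Bm = mat2 1 1 \<i> (-\<i>)"
definition Dk :: "complex \<Rightarrow> nat \<Rightarrow> complex^2^2" where
  "Dk w k = mat2 (w^k) 0 0 (inverse w ^ k)"
definition Rm :: "real \<Rightarrow> complex^2^2" where
  "Rm p = mat2 (cos p) (sin p) (- sin p) (cos p)"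
definition su :: "complex^2^2 \<Rightarrow> bool" where
  "su M \<longleftrightarrow> M$2$1 = - cnj (M$1$2) \<and> M$2$2 = cnj (M$1$1)"

lemma su_mult: "su M \<Longrightarrow> su N \<Longrightarrow> su (M ** N)"
  apply (subst (asm) (1 2) mat2_eta)
  apply (subst mat2_eta[of M], subst mat2_eta[of N])
  by (auto simp: su_def mat2_mult)

lemma expiZ_ARB: "expiZ p = Am ** Rm p ** Bm"
  unfolding expiZ_def Am_def Rm_def Bm_def mat2_mult mat2_eq_iff
  by (simp add: complex_eq_iff Re_exp Im_exp field_simps)


lemma step_mat:
  assumes "0 \<le> t" "t \<le> pi"
  shows "Bm ** (Wmat (cos t) ** expiZ p) = Dk (exp (\<i> * of_real t)) 1 ** Rm p ** Bm"
proof -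
  have s: "sqrt (1 - (cos t)\<^sup>2) = sin t"
    using assms by (simp add: sin_squared_eq[symmetric] sin_ge_zero)
  have e: "inverse (exp (\<i> * of_real t)) = exp (- (\<i> * of_real t))" by (simp add: exp_minus)
  show ?thesis
    unfolding expiZ_def Wmat_def Dk_def Rm_def Bm_def power_one_right e
    unfolding mat2_mult mat2_eq_iff s
    by (simp add: complex_eq_iff Re_exp Im_exp algebra_simps)
qed


lemma factor_D:
  assumes "w \<noteq> 0"
  shows "nlft_factor (complex_of_real g) (int k) (w^2) ** Dk w k = Dk w k ** Rm (arctan g)"
proof -
  have p1: "(w^2) powi (int k) = w^k * w^k" by (simp add: power_int_of_nat power_mult_distrib[symmetric] power2_eq_square)
  have p2: "(w^2) powi (- int k) = inverse (w^k * w^k)"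
    by (simp add: power_int_minus power_int_of_nat power_mult_distrib[symmetric] power2_eq_square)
  have sp: "sqrt (1 + g\<^sup>2) > 0" by (simp add: add_pos_nonneg)
  show ?thesis
    unfolding nlft_factor_def Let_def Dk_def Rm_def p1 p2 mat2_mult mat2_eq_iff
    using assms sp
    by (simp add: cos_arctan sin_arctan field_simps power_inverse)
qed

lemma factor_su:
  assumes "cnj w = inverse w"
  shows "su (nlft_factor (complex_of_real g) (int k) (w^2))"
proof -
  have p1: "(w^2) powi (int k) = w^k * w^k" by (simp add: power_int_of_nat power_mult_distrib[symmetric] power2_eq_square)
  have p2: "(w^2) powi (- int k) = inverse (w^k * w^k)"
    by (simp add: power_int_minus power_int_of_nat power_mult_distrib[symmetric] power2_eq_square)
  show ?thesis
    unfolding nlft_factor_def Let_def su_def p1 p2 mat2_nth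
    using assms by (simp add: power_inverse)
qed

lemma nlft_Suc: "nlft gamma 0 (int (Suc n)) z = nlft gamma 0 (int n) z ** nlft_factor (gamma (int (Suc n))) (int (Suc n)) z"
proof -
  have "[0..int (Suc n)] = [0..int n] @ [int (Suc n)]"
    using upto_rec2[of 0 "int (Suc n)"] by simp
  then show ?thesis unfolding nlft_def by simp
qed

lemma nlft_0: "nlft gamma 0 0 z = nlft_factor (gamma 0) 0 z"
  unfolding nlft_def by simp


lemma Dk_0: "Dk w 0 = mat 1" by (simp add: Dk_def mat2_one)
lemma Dk_Suc: "Dk w (Suc n) = Dk w n ** Dk w 1" by (simp add: Dk_def mat2_mult mult.commute)

lemma main_ind:
  fixes gamma :: "int \<Rightarrow> real"
  assumes "0 \<le> t" "t \<le> pi" and w: "w = exp (\<i> * of_real t)"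
  shows "Umat n (\<lambda>k. arctan (gamma (int k))) (cos t)
      = Am ** (nlft (\<lambda>k. complex_of_real (gamma k)) 0 (int n) (w^2) ** Dk w n) ** Bm
    \<and> su (nlft (\<lambda>k. complex_of_real (gamma k)) 0 (int n) (w^2))"
proof (induction n)
  case 0
  have w0: "w \<noteq> 0" using w by simp
  have cw: "cnj w = inverse w" using w by (simp add: exp_cnj exp_minus)
  have "nlft_factor (complex_of_real (gamma 0)) (int 0) (w^2) ** Dk w 0 = Dk w 0 ** Rm (arctan (gamma 0))"
    by (rule factor_D[OF w0])
  then have F: "nlft_factor (complex_of_real (gamma 0)) 0 (w^2) = Rm (arctan (gamma 0))"
    by (simp add: Dk_0)
  show ?case
    using factor_su[OF cw, of "gamma 0" 0]
    by (simp add: nlft_0 F Dk_0 expiZ_ARB matrix_mul_assoc)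
next
  case (Suc n)
  have w0: "w \<noteq> 0" using w by simp
  have cw: "cnj w = inverse w" using w by (simp add: exp_cnj exp_minus)
  let ?G = "\<lambda>k. complex_of_real (gamma k)"
  let ?P = "nlft ?G 0 (int n) (w^2)"
  let ?F = "nlft_factor (?G (int (Suc n))) (int (Suc n)) (w^2)"
  let ?R = "Rm (arctan (gamma (int (Suc n))))"
  have FD: "?F ** Dk w (Suc n) = Dk w (Suc n) ** ?R"
    by (rule factor_D[OF w0])
  have "Umat (Suc n) (\<lambda>k. arctan (gamma (int k))) (cos t)
      = Am ** (?P ** Dk w n) ** Bm ** (Wmat (cos t) ** expiZ (arctan (gamma (int (Suc n)))))"
    using conjunct1[OF Suc.IH] by simp
  also have "\<dots> = Am ** (?P ** Dk w n) ** (Bm ** (Wmat (cos t) ** expiZ (arctan (gamma (int (Suc n))))))"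
    by (simp add: matrix_mul_assoc)
  also have "\<dots> = Am ** (?P ** Dk w n) ** (Dk w 1 ** ?R ** Bm)"
    using step_mat[OF assms(1,2)] w by simp
  also have "\<dots> = Am ** (?P ** (Dk w n ** Dk w 1 ** ?R)) ** Bm"
    by (simp add: matrix_mul_assoc)
  also have "\<dots> = Am ** (?P ** (?F ** Dk w (Suc n))) ** Bm"
    by (simp only: FD) (simp only: Dk_Suc[of w n] matrix_mul_assoc)
  also have "\<dots> = Am ** (nlft ?G 0 (int (Suc n)) (w^2) ** Dk w (Suc n)) ** Bm"
    by (simp only: nlft_Suc matrix_mul_assoc)
  finally have eq: "Umat (Suc n) (\<lambda>k. arctan (gamma (int k))) (cos t)
      = Am ** (nlft ?G 0 (int (Suc n)) (w^2) ** Dk w (Suc n)) ** Bm" .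
  have "su (nlft ?G 0 (int (Suc n)) (w^2))"
    unfolding nlft_Suc by (rule su_mult[OF conjunct2[OF Suc.IH] factor_su[OF cw]])
  with eq show ?case by blast
qed


lemma final_entry: "su Q \<Longrightarrow> Im ((Am ** Q ** Bm)$1$1) = Re (Q$1$2)"
  apply (subst mat2_eta[of Q])
  by (auto simp: su_def Am_def Bm_def mat2_mult)

lemma Dk_su: "cnj w = inverse w \<Longrightarrow> su (Dk w n)"
  by (simp add: su_def Dk_def)

lemma Dk_12: "((P::complex^2^2) ** Dk w n)$1$2 = P$1$2 * inverse w ^ n"
  apply (subst mat2_eta[of P])
  by (simp add: Dk_def mat2_mult)

theorem theorem3p2:
  fixes n :: nat and f :: "real \<Rightarrow> real" and gamma :: "int \<Rightarrow> real"
  assumes supp: "\<forall>k. gamma k \<noteq> 0 \<longrightarrow> 0 \<le> k \<and> k \<le> int n"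
    and hb: "\<forall>\<theta>\<in>{0..pi}.
      Re (nlft_b (\<lambda>k. complex_of_real (gamma k)) 0 (int n) (exp (2 * \<i> * of_real \<theta>))
          * exp (- \<i> * of_nat n * of_real \<theta>)) = f (cos \<theta>)"
  shows "\<forall>x\<in>{-1..1}. Im (Umat n (\<lambda>k. arctan (gamma (int k))) x $ 1 $ 1) = f x"
proof
  fix x :: real assume x: "x \<in> {-1..1}"
  define t where "t = arccos x"
  have t0: "0 \<le> t" "t \<le> pi" using x by (auto simp: t_def arccos_lbound arccos_ubound)
  have xt: "x = cos t" using x by (simp add: t_def cos_arccos)
  define w where "w = exp (\<i> * of_real t)"
  have cw: "cnj w = inverse w" by (simp add: w_def exp_cnj exp_minus)
  have w2: "exp (2 * \<i> * of_real t) = w^2"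
    by (simp add: w_def power2_eq_square exp_add[symmetric] mult.assoc)
  have wn: "exp (- \<i> * of_nat n * of_real t) = inverse w ^ n"
    by (simp add: w_def exp_minus[symmetric] exp_of_nat_mult[symmetric] mult.commute mult.left_commute)
  let ?P = "nlft (\<lambda>k. complex_of_real (gamma k)) 0 (int n) (w^2)"
  have M: "Umat n (\<lambda>k. arctan (gamma (int k))) (cos t) = Am ** (?P ** Dk w n) ** Bm"
    and S: "su ?P"
    using main_ind[OF t0 w_def, of n gamma] by auto
  have "Im (Umat n (\<lambda>k. arctan (gamma (int k))) x $ 1 $ 1) = Re ((?P ** Dk w n)$1$2)"
    unfolding xt M by (rule final_entry[OF su_mult[OF S Dk_su[OF cw]]])
  also have "\<dots> = Re (?P$1$2 * inverse w ^ n)" by (simp add: Dk_12)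
  also have "\<dots> = f (cos t)"
  proof -
    have "t \<in> {0..pi}" using t0 by simp
    from hb[rule_format, OF this] show ?thesis unfolding nlft_b_def w2 wn .
  qed
  finally show "Im (Umat n (\<lambda>k. arctan (gamma (int k))) x $ 1 $ 1) = f x" using xt by simp
qed


end
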